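(* Let $n\ge 5$ and let $\sigma$ be a maximal simplex of $\Delta_n$. Suppose there are a vertex $v$, distinct $i_0,j_0,k_0\in[n]$, and distinct $p_0,q_0\in[n]\setminus\{i_0,j_0,k_0\}$ such that $\{v^{i_0,j_0},v^{i_0,k_0},v^{j_0,k_0},v^{p_0},v^{q_0}\}\subseteq\sigma$. Then $\sigma=N(v)\cup K_v^{i_0,j_0,k_0}$.
   Context: $\mathbb{I}_n$ is the $n$-dimensional hypercube graph on vertex set $\{0,1\}^n$ (adjacent iff differing in exactly one coordinate), with Hamming distance $d(v,w)=\#\{i: v(i)\ne w(i)\}$. $\Delta_n=\mathcal{VR}(\mathbb{I}_n;3)$ is the simplicial complex whose simplices are the subsets $\sigma\subseteq\{0,1\}^n$ with $d(x,y)\le 3$ for all $x,y\in\sigma$. $[n]=\{1,\dots,n\}$. For a vertex $v$ and distinct $i_1,\dots,i_k$, $v^{i_1,\dots,i_k}$ is $v$ with exactly coordinates $i_1,\dots,i_k$ changed. $N(v)=\{v^i:i\in[n]\}$. For distinct $i,j,k$, $K_v^{i,j,k}=\{v,v^{i,j},v^{j,k},v^{i,k}\}$. *)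

theory Defs
  imports Main
begin

text \<open>Vertices of the hypercube I_n: elements of {0,1}^n, encoded by their support,
  i.e. subsets of {1..n} (coordinate i is 1 iff i is in the set).\<close>

definition cube_vertices :: "nat \<Rightarrow> nat set set" where
  "cube_vertices n = Pow {1..n}"

definition hdist :: "nat set \<Rightarrow> nat set \<Rightarrow> nat" where
  "hdist v w = card ((v - w) \<union> (w - v))"

definition flip :: "nat set \<Rightarrow> nat \<Rightarrow> nat set" where
  "flip v i = (if i \<in> v then v - {i} else insert i v)"

text \<open>Simplices of Delta_n = VR(I_n;3): nonempty (finite) sets of vertices with pairwise
  Hamming distance at most 3.\<close>
definition is_simplex :: "nat \<Rightarrow> nat set set \<Rightarrow> bool" where
  "is_simplex n \<sigma> \<longleftrightarrow> \<sigma> \<noteq> {} \<and> \<sigma> \<subseteq> cube_vertices n \<and>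
     (\<forall>x\<in>\<sigma>. \<forall>y\<in>\<sigma>. hdist x y \<le> 3)"

definition maximal_simplex :: "nat \<Rightarrow> nat set set \<Rightarrow> bool" where
  "maximal_simplex n \<sigma> \<longleftrightarrow> is_simplex n \<sigma> \<and>
     (\<forall>\<tau>. is_simplex n \<tau> \<and> \<sigma> \<subseteq> \<tau> \<longrightarrow> \<tau> = \<sigma>)"

definition nbhd :: "nat \<Rightarrow> nat set \<Rightarrow> nat set set" where
  "nbhd n v = {flip v i | i. i \<in> {1..n}}"

definition Kset :: "nat set \<Rightarrow> nat \<Rightarrow> nat \<Rightarrow> nat \<Rightarrow> nat set set" where
  "Kset v i j k = {v, flip (flip v i) j, flip (flip v j) k, flip (flip v i) k}"

end

theory Submission imports Defs begin
definition sd :: "'a set \<Rightarrow> 'a set \<Rightarrow> 'a set" where "sd A B = (A - B) \<union> (B - A)"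

lemma card_sd: "finite a \<Longrightarrow> finite b \<Longrightarrow> card (sd a b) + 2*card(a\<inter>b) = card a + card b"
proof -
  assume f: "finite a" "finite b"
  have e: "sd a b = (a\<union>b) - (a\<inter>b)" unfolding sd_def by auto
  have "card ((a\<union>b) - (a\<inter>b)) = card (a\<union>b) - card (a\<inter>b)"
    by (rule card_Diff_subset) (use f in auto)
  moreover have "card a + card b = card(a\<union>b) + card(a\<inter>b)" using card_Un_Int f by blast
  moreover have "card(a\<inter>b) \<le> card (a\<union>b)" using f by (intro card_mono) auto
  ultimately show ?thesis using e by simp
qed

lemma key:
  assumes fa: "finite a" and d: "distinct [i,j,k,p,q]"
    and c1: "card (sd a {i,j}) \<le> 3" and c2: "card (sd a {i,k}) \<le> 3" and c3: "card (sd a {j,k}) \<le> 3"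
    and c4: "card (sd a {p}) \<le> 3" and c5: "card (sd a {q}) \<le> 3"
  shows "card a \<le> 1 \<or> a = {i,j} \<or> a = {i,k} \<or> a = {j,k}"
proof -
  have h1: "card a + 2 \<le> 3 + 2*card(a\<inter>{i,j})" using card_sd[OF fa, of "{i,j}"] c1 d by simp
  have h2: "card a + 2 \<le> 3 + 2*card(a\<inter>{i,k})" using card_sd[OF fa, of "{i,k}"] c2 d by simp
  have h3: "card a + 2 \<le> 3 + 2*card(a\<inter>{j,k})" using card_sd[OF fa, of "{j,k}"] c3 d by simp
  have h4: "card a + 1 \<le> 3 + 2*card(a\<inter>{p})" using card_sd[OF fa, of "{p}"] c4 by simp
  have h5: "card a + 1 \<le> 3 + 2*card(a\<inter>{q})" using card_sd[OF fa, of "{q}"] c5 by simp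
  have lb: "card ({i,j,k,p,q} \<inter> a) \<le> card a" using fa by (intro card_mono) auto
  have eq: "card a \<le> card ({i,j,k,p,q} \<inter> a) \<Longrightarrow> {i,j,k,p,q} \<inter> a = a"
    using fa lb by (intro card_subset_eq) auto
  show ?thesis
    using h1 h2 h3 h4 h5 lb eq d
    by (cases "i\<in>a"; cases "j\<in>a"; cases "k\<in>a"; cases "p\<in>a"; cases "q\<in>a"; simp; presburger?)
qed

lemma card_sd_le: "finite a \<Longrightarrow> finite b \<Longrightarrow> card (sd a b) \<le> card a + card b"
  using card_sd[of a b] by simp

lemma fam_bound:
  assumes "finite b" "finite b'"
    and "card b \<le> 1 \<or> (b \<subseteq> {i,j,k} \<and> card b \<le> 2)"
    and "card b' \<le> 1 \<or> (b' \<subseteq> {i,j,k} \<and> card b' \<le> 2)"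
  shows "card (sd b b') \<le> 3"
proof (cases "b \<subseteq> {i,j,k} \<and> b' \<subseteq> {i,j,k}")
  case True
  then have "sd b b' \<subseteq> {i,j,k}" unfolding sd_def by auto
  then have "card (sd b b') \<le> card {i,j,k}" by (intro card_mono) auto
  also have "\<dots> \<le> 3" by (simp add: card_insert_if)
  finally show ?thesis .
next
  case False
  then show ?thesis using card_sd_le[OF assms(1,2)] assms(3,4) by auto
qed

lemma flip_sd: "flip v i = sd v {i}"
  unfolding flip_def sd_def by auto

lemma flip2_sd: "i \<noteq> j \<Longrightarrow> flip (flip v i) j = sd v {i,j}"
  unfolding flip_def sd_def by auto

lemma sd_sd: "sd (sd v a) (sd v b) = sd a b"
  unfolding sd_def by auto

lemma sd_inv: "sd v (sd v w) = w"
  unfolding sd_def by auto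

lemma hdist_sd: "hdist x y = card (sd x y)"
  unfolding hdist_def sd_def by simp

theorem mainTheorem15:
  fixes n :: nat and \<sigma> :: "nat set set" and v :: "nat set"
    and i0 j0 k0 p0 q0 :: nat
  assumes "n \<ge> 5"
    and "maximal_simplex n \<sigma>"
    and "v \<in> cube_vertices n"
    and "i0 \<in> {1..n}" and "j0 \<in> {1..n}" and "k0 \<in> {1..n}"
    and "i0 \<noteq> j0" and "i0 \<noteq> k0" and "j0 \<noteq> k0"
    and "p0 \<in> {1..n} - {i0, j0, k0}" and "q0 \<in> {1..n} - {i0, j0, k0}"
    and "p0 \<noteq> q0"
    and "{flip (flip v i0) j0, flip (flip v i0) k0, flip (flip v j0) k0,
          flip v p0, flip v q0} \<subseteq> \<sigma>"
  shows "\<sigma> = nbhd n v \<union> Kset v i0 j0 k0"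
proof -
  define S where "S = nbhd n v \<union> Kset v i0 j0 k0"
  have vsub: "v \<subseteq> {1..n}" using assms(3) unfolding cube_vertices_def by auto
  have d: "distinct [i0,j0,k0,p0,q0]" using assms(7-12) by auto
  have simp_sig: "is_simplex n \<sigma>" using assms(2) unfolding maximal_simplex_def by auto
  have mem: "sd v {i0,j0} \<in> \<sigma>" "sd v {i0,k0} \<in> \<sigma>" "sd v {j0,k0} \<in> \<sigma>"
    "sd v {p0} \<in> \<sigma>" "sd v {q0} \<in> \<sigma>"
    using assms(13) flip2_sd[OF assms(7), of v] flip2_sd[OF assms(8), of v]
      flip2_sd[OF assms(9), of v] flip_sd[of v p0] flip_sd[of v q0] by auto
  have sub: "\<sigma> \<subseteq> S"
  proof
    fix w assume w: "w \<in> \<sigma>"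
    define a where "a = sd v w"
    have wsub: "w \<subseteq> {1..n}" using w simp_sig unfolding is_simplex_def cube_vertices_def by auto
    have asub: "a \<subseteq> {1..n}" using vsub wsub unfolding a_def sd_def by auto
    have fa: "finite a" using asub finite_subset by blast
    have wa: "w = sd v a" unfolding a_def by (simp add: sd_inv)
    have dist: "\<And>b. sd v b \<in> \<sigma> \<Longrightarrow> card (sd a b) \<le> 3"
    proof -
      fix b assume "sd v b \<in> \<sigma>"
      then have "hdist w (sd v b) \<le> 3" using w simp_sig unfolding is_simplex_def by auto
      then show "card (sd a b) \<le> 3" unfolding hdist_sd wa sd_sd .
    qed
    have "card a \<le> 1 \<or> a = {i0,j0} \<or> a = {i0,k0} \<or> a = {j0,k0}"
      by (rule key[OF fa d]) (rule dist, rule mem)+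
    then consider "a = {}" | x where "a = {x}" | "a = {i0,j0}" | "a = {i0,k0}" | "a = {j0,k0}"
    proof -
      assume h: "card a \<le> 1 \<or> a = {i0,j0} \<or> a = {i0,k0} \<or> a = {j0,k0}"
        and c1: "a = {} \<Longrightarrow> thesis" and c2: "\<And>x. a = {x} \<Longrightarrow> thesis"
        and c3: "a = {i0,j0} \<Longrightarrow> thesis" and c4: "a = {i0,k0} \<Longrightarrow> thesis"
        and c5: "a = {j0,k0} \<Longrightarrow> thesis"
      show thesis
      proof (cases "card a \<le> 1")
        case True
        then have "card a = 0 \<or> card a = 1" by linarith
        then show thesis
        proof
          assume "card a = 0" then have "a = {}" using fa by simp
          then show thesis by (rule c1)
        next
          assume "card a = 1" then obtain x where "a = {x}" by (rule card_1_singletonE)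
          then show thesis by (rule c2)
        qed
      next
        case False then show thesis using h c3 c4 c5 by blast
      qed
    qed
    then show "w \<in> S"
    proof cases
      case 1 then show ?thesis unfolding S_def Kset_def wa sd_def by simp
    next
      case (2 x)
      then have "x \<in> {1..n}" using asub by auto
      then show ?thesis using 2 unfolding S_def nbhd_def wa by (auto simp: flip_sd)
    next
      case 3 then show ?thesis using assms(7-9) unfolding S_def Kset_def wa by (simp add: flip2_sd)
    next
      case 4 then show ?thesis using assms(7-9) unfolding S_def Kset_def wa by (simp add: flip2_sd)
    next
      case 5 then show ?thesis using assms(7-9) unfolding S_def Kset_def wa by (simp add: flip2_sd)
    qed
  qed
  have repr: "\<And>x. x \<in> S \<Longrightarrow> \<exists>b. x = sd v b \<and> b \<subseteq> {1..n} \<and>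
      (card b \<le> 1 \<or> (b \<subseteq> {i0,j0,k0} \<and> card b \<le> 2))"
  proof -
    fix x assume "x \<in> S"
    then consider t where "t \<in> {1..n}" "x = sd v {t}" | "x = sd v {}" | "x = sd v {i0,j0}"
      | "x = sd v {i0,k0}" | "x = sd v {j0,k0}"
    proof -
      assume xS: "x \<in> S"
      assume c1: "\<And>t. t \<in> {1..n} \<Longrightarrow> x = sd v {t} \<Longrightarrow> thesis"
        and c2: "x = sd v {} \<Longrightarrow> thesis" and c3: "x = sd v {i0,j0} \<Longrightarrow> thesis"
        and c4: "x = sd v {i0,k0} \<Longrightarrow> thesis" and c5: "x = sd v {j0,k0} \<Longrightarrow> thesis"
      have e0: "sd v {} = v" unfolding sd_def by simp
      from xS have "x \<in> nbhd n v \<or> x \<in> Kset v i0 j0 k0" unfolding S_def by blast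
      then show thesis
      proof
        assume "x \<in> nbhd n v"
        then obtain t where "t \<in> {1..n}" "x = flip v t" unfolding nbhd_def by blast
        then show thesis using c1 flip_sd by metis
      next
        assume "x \<in> Kset v i0 j0 k0"
        then have "x = v \<or> x = flip (flip v i0) j0 \<or> x = flip (flip v j0) k0 \<or> x = flip (flip v i0) k0"
          unfolding Kset_def by blast
        then show thesis using c2 c3 c4 c5 e0 flip2_sd[OF assms(7), of v] flip2_sd[OF assms(8), of v]
          flip2_sd[OF assms(9), of v] by metis
      qed
    qed
    then show "?thesis x"
    proof cases
      case (1 t) then show ?thesis by (intro exI[of _ "{t}"]) auto
    next
      case 2 then show ?thesis by (intro exI[of _ "{}"]) auto
    next
      case 3 then show ?thesis using assms(4-6) by (intro exI[of _ "{i0,j0}"]) (auto simp: card_insert_if)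
    next
      case 4 then show ?thesis using assms(4-6) by (intro exI[of _ "{i0,k0}"]) (auto simp: card_insert_if)
    next
      case 5 then show ?thesis using assms(4-6) by (intro exI[of _ "{j0,k0}"]) (auto simp: card_insert_if)
    qed
  qed
  have simpS: "is_simplex n S"
    unfolding is_simplex_def
  proof (intro conjI ballI)
    show "S \<noteq> {}" unfolding S_def Kset_def by auto
    show "S \<subseteq> cube_vertices n"
    proof
      fix x assume "x \<in> S"
      then obtain b where "x = sd v b" "b \<subseteq> {1..n}" using repr by blast
      then show "x \<in> cube_vertices n" using vsub unfolding cube_vertices_def sd_def by auto
    qed
    fix x y assume "x \<in> S" "y \<in> S"
    obtain b where b: "x = sd v b" "b \<subseteq> {1..n}"
        "card b \<le> 1 \<or> (b \<subseteq> {i0,j0,k0} \<and> card b \<le> 2)"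
      using repr[OF \<open>x \<in> S\<close>] by blast
    obtain b' where b': "y = sd v b'" "b' \<subseteq> {1..n}"
        "card b' \<le> 1 \<or> (b' \<subseteq> {i0,j0,k0} \<and> card b' \<le> 2)"
      using repr[OF \<open>y \<in> S\<close>] by blast
    have "finite b" "finite b'" using b(2) b'(2) finite_subset by blast+
    then have "card (sd b b') \<le> 3" by (rule fam_bound[OF _ _ b(3) b'(3)])
    then show "hdist x y \<le> 3" unfolding hdist_sd b(1) b'(1) sd_sd .
  qed
  have "S = \<sigma>" using assms(2) simpS sub unfolding maximal_simplex_def by blast
  then show ?thesis unfolding S_def by simp
qed

end
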